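(* Let $n\ge 2$ and let $\{A,B\}$ be a partition of $[n]=\{1,\dots,n\}$ into two nonempty sets. For any $n$-qubit pure state of the product form $\ket{\psi}=\ket{\psi_A}\otimes\ket{\psi_B}$, where $\ket{\psi_A}$ is a pure state on the qubits in $A$ and $\ket{\psi_B}$ a pure state on the qubits in $B$, $$\mathcal{C}(\ket{\psi})=\mathcal{C}(\ket{\psi_A})+\mathcal{C}(\ket{\psi_B})-\mathcal{C}(\ket{\psi_A})\,\mathcal{C}(\ket{\psi_B}).$$
   Context: For an $m$-qubit pure state $\ket{\phi}$ with qubits labelled by a set $S$ ($|S|=m$), the concentratable entanglement is $\mathcal{C}(\ket{\phi})=1-\frac{1}{2^{m}}\sum_{\alpha\subseteq S}\mathrm{Tr}[\rho_\alpha^2]$, where $\rho_\alpha$ is the reduced density matrix of $\ket{\phi}\!\bra{\phi}$ on the qubits in $\alpha$, with the convention $\mathrm{Tr}[\rho_\emptyset^2]=1$. *)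

theory Defs
  imports Complex_Main
begin

(* A pure state on a finite set S of qubit labels is given by its amplitudes in the
   computational basis.  A basis vector is identified with the subset x \<subseteq> S of
   qubits that are in state |1>.  Only the values on Pow S matter. *)

definition pure_state :: "nat set \<Rightarrow> (nat set \<Rightarrow> complex) \<Rightarrow> bool" where
  "pure_state S \<psi> \<longleftrightarrow> finite S \<and> (\<Sum>x\<in>Pow S. (cmod (\<psi> x))\<^sup>2) = 1"

definition reduced_dm :: "nat set \<Rightarrow> (nat set \<Rightarrow> complex) \<Rightarrow> nat set \<Rightarrow> nat set \<Rightarrow> nat set \<Rightarrow> complex" where
  "reduced_dm S \<psi> \<alpha> x y = (\<Sum>z\<in>Pow (S - \<alpha>). \<psi> (x \<union> z) * cnj (\<psi> (y \<union> z)))"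

(* Purity Tr[rho_alpha^2]; for alpha = {} this equals the squared norm, i.e. 1 for a pure state *)
definition purity :: "nat set \<Rightarrow> (nat set \<Rightarrow> complex) \<Rightarrow> nat set \<Rightarrow> real" where
  "purity S \<psi> \<alpha> = Re (\<Sum>x\<in>Pow \<alpha>. \<Sum>y\<in>Pow \<alpha>. reduced_dm S \<psi> \<alpha> x y * reduced_dm S \<psi> \<alpha> y x)"

definition conc_ent :: "nat set \<Rightarrow> (nat set \<Rightarrow> complex) \<Rightarrow> real" where
  "conc_ent S \<psi> = 1 - (1 / 2 ^ card S) * (\<Sum>\<alpha>\<in>Pow S. purity S \<psi> \<alpha>)"

definition tensor_state :: "nat set \<Rightarrow> (nat set \<Rightarrow> complex) \<Rightarrow> nat set \<Rightarrow> (nat set \<Rightarrow> complex) \<Rightarrow> nat set \<Rightarrow> complex" where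
  "tensor_state A \<psi>A B \<psi>B x = \<psi>A (x \<inter> A) * \<psi>B (x \<inter> B)"

end

theory Submission
  imports Defs
begin

lemma sum_Pow_Un:
  assumes "finite C" "finite D" "C \<inter> D = {}"
  shows "(\<Sum>x\<in>Pow (C \<union> D). f x) = (\<Sum>u\<in>Pow C. \<Sum>v\<in>Pow D. f (u \<union> v))"
proof -
  have img: "Pow (C \<union> D) = (\<lambda>(u,v). u \<union> v) ` (Pow C \<times> Pow D)"
  proof
    show "Pow (C \<union> D) \<subseteq> (\<lambda>(u,v). u \<union> v) ` (Pow C \<times> Pow D)"
    proof
      fix x assume "x \<in> Pow (C \<union> D)"
      then have "x = (\<lambda>(u,v). u \<union> v) (x \<inter> C, x \<inter> D)" "(x \<inter> C, x \<inter> D) \<in> Pow C \<times> Pow D" by auto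
      then show "x \<in> (\<lambda>(u,v). u \<union> v) ` (Pow C \<times> Pow D)" by blast
    qed
  qed auto
  have inj: "inj_on (\<lambda>(u,v). u \<union> v) (Pow C \<times> Pow D)"
  proof (rule inj_onI, clarify)
    fix a b c d assume h: "a \<subseteq> C" "b \<subseteq> D" "c \<subseteq> C" "d \<subseteq> D" "a \<union> b = c \<union> d"
    have "a = (a \<union> b) \<inter> C" "c = (c \<union> d) \<inter> C" "b = (a \<union> b) \<inter> D" "d = (c \<union> d) \<inter> D"
      using h assms(3) by auto
    then show "a = c \<and> b = d" using h(5) by metis
  qed
  have "(\<Sum>x\<in>Pow (C \<union> D). f x) = (\<Sum>p\<in>Pow C \<times> Pow D. f ((\<lambda>(u,v). u \<union> v) p))"
    unfolding img by (rule sum.reindex[OF inj, unfolded comp_def])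
  also have "\<dots> = (\<Sum>u\<in>Pow C. \<Sum>v\<in>Pow D. f (u \<union> v))"
    by (subst sum.cartesian_product) (simp add: case_prod_beta)
  finally show ?thesis .
qed

definition cpur :: "nat set \<Rightarrow> (nat set \<Rightarrow> complex) \<Rightarrow> nat set \<Rightarrow> complex" where
  "cpur S \<psi> \<alpha> = (\<Sum>x\<in>Pow \<alpha>. \<Sum>y\<in>Pow \<alpha>. reduced_dm S \<psi> \<alpha> x y * reduced_dm S \<psi> \<alpha> y x)"

lemma rdm_herm: "reduced_dm S \<psi> \<alpha> y x = cnj (reduced_dm S \<psi> \<alpha> x y)"
  unfolding reduced_dm_def by (simp add: mult.commute)

lemma cpur_real: "Im (cpur S \<psi> \<alpha>) = 0"
proof -
  have "\<And>x y. Im (reduced_dm S \<psi> \<alpha> x y * reduced_dm S \<psi> \<alpha> y x) = 0"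
    by (subst rdm_herm[of S \<psi> \<alpha> y x]) (simp add: algebra_simps)
  then show ?thesis unfolding cpur_def by (simp add: Im_sum)
qed

lemma purity_cpur: "purity S \<psi> \<alpha> = Re (cpur S \<psi> \<alpha>)"
  unfolding purity_def cpur_def ..

context
  fixes A B :: "nat set" and \<psi>A \<psi>B :: "nat set \<Rightarrow> complex"
  assumes fA: "finite A" and fB: "finite B" and dis: "A \<inter> B = {}"
begin

lemma rdm_tensor:
  assumes "\<alpha> \<subseteq> A \<union> B" "x \<subseteq> \<alpha>" "y \<subseteq> \<alpha>"
  shows "reduced_dm (A \<union> B) (tensor_state A \<psi>A B \<psi>B) \<alpha> x y
     = reduced_dm A \<psi>A (\<alpha> \<inter> A) (x \<inter> A) (y \<inter> A) * reduced_dm B \<psi>B (\<alpha> \<inter> B) (x \<inter> B) (y \<inter> B)"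
proof -
  have eq: "A \<union> B - \<alpha> = (A - \<alpha> \<inter> A) \<union> (B - \<alpha> \<inter> B)" by auto
  have "reduced_dm (A \<union> B) (tensor_state A \<psi>A B \<psi>B) \<alpha> x y
     = (\<Sum>u\<in>Pow (A - \<alpha> \<inter> A). \<Sum>v\<in>Pow (B - \<alpha> \<inter> B).
          tensor_state A \<psi>A B \<psi>B (x \<union> (u \<union> v)) * cnj (tensor_state A \<psi>A B \<psi>B (y \<union> (u \<union> v))))"
    unfolding reduced_dm_def eq using fA fB dis by (subst sum_Pow_Un) auto
  also have "\<dots> = (\<Sum>u\<in>Pow (A - \<alpha> \<inter> A). \<Sum>v\<in>Pow (B - \<alpha> \<inter> B).
          (\<psi>A (x \<inter> A \<union> u) * cnj (\<psi>A (y \<inter> A \<union> u))) * (\<psi>B (x \<inter> B \<union> v) * cnj (\<psi>B (y \<inter> B \<union> v))))"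
  proof (intro sum.cong refl)
    fix u v assume "u \<in> Pow (A - \<alpha> \<inter> A)" "v \<in> Pow (B - \<alpha> \<inter> B)"
    then have "(x \<union> (u \<union> v)) \<inter> A = x \<inter> A \<union> u" "(x \<union> (u \<union> v)) \<inter> B = x \<inter> B \<union> v"
      "(y \<union> (u \<union> v)) \<inter> A = y \<inter> A \<union> u" "(y \<union> (u \<union> v)) \<inter> B = y \<inter> B \<union> v" using dis by auto
    then show "tensor_state A \<psi>A B \<psi>B (x \<union> (u \<union> v)) * cnj (tensor_state A \<psi>A B \<psi>B (y \<union> (u \<union> v))) =
          (\<psi>A (x \<inter> A \<union> u) * cnj (\<psi>A (y \<inter> A \<union> u))) * (\<psi>B (x \<inter> B \<union> v) * cnj (\<psi>B (y \<inter> B \<union> v)))"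
      unfolding tensor_state_def by (simp add: algebra_simps)
  qed
  also have "\<dots> = reduced_dm A \<psi>A (\<alpha> \<inter> A) (x \<inter> A) (y \<inter> A) * reduced_dm B \<psi>B (\<alpha> \<inter> B) (x \<inter> B) (y \<inter> B)"
    unfolding reduced_dm_def by (simp add: sum_product)
  finally show ?thesis .
qed

lemma cpur_tensor:
  assumes "\<alpha> \<subseteq> A \<union> B"
  shows "cpur (A \<union> B) (tensor_state A \<psi>A B \<psi>B) \<alpha> = cpur A \<psi>A (\<alpha> \<inter> A) * cpur B \<psi>B (\<alpha> \<inter> B)"
proof -
  let ?rA = "reduced_dm A \<psi>A (\<alpha> \<inter> A)" and ?rB = "reduced_dm B \<psi>B (\<alpha> \<inter> B)"
  have al: "\<alpha> = (\<alpha> \<inter> A) \<union> (\<alpha> \<inter> B)" using assms by auto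
  have fa: "finite (\<alpha> \<inter> A)" "finite (\<alpha> \<inter> B)" using fA fB by auto
  have d: "(\<alpha> \<inter> A) \<inter> (\<alpha> \<inter> B) = {}" using dis by auto
  have "cpur (A \<union> B) (tensor_state A \<psi>A B \<psi>B) \<alpha>
     = (\<Sum>x\<in>Pow \<alpha>. \<Sum>y\<in>Pow \<alpha>. (?rA (x \<inter> A) (y \<inter> A) * ?rA (y \<inter> A) (x \<inter> A)) *
           (?rB (x \<inter> B) (y \<inter> B) * ?rB (y \<inter> B) (x \<inter> B)))"
    unfolding cpur_def using assms by (intro sum.cong refl) (simp add: rdm_tensor algebra_simps)
  also have "\<dots> = (\<Sum>xa\<in>Pow (\<alpha> \<inter> A). \<Sum>xb\<in>Pow (\<alpha> \<inter> B). \<Sum>ya\<in>Pow (\<alpha> \<inter> A). \<Sum>yb\<in>Pow (\<alpha> \<inter> B).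
          (?rA xa ya * ?rA ya xa) * (?rB xb yb * ?rB yb xb))"
  proof -
    have "\<And>u v. u \<subseteq> A \<Longrightarrow> v \<subseteq> B \<Longrightarrow> (u \<union> v) \<inter> A = u \<and> (u \<union> v) \<inter> B = v" using dis by auto
    note e = this
    have S: "\<And>g. (\<Sum>x\<in>Pow \<alpha>. g x) = (\<Sum>u\<in>Pow (\<alpha> \<inter> A). \<Sum>v\<in>Pow (\<alpha> \<inter> B). g (u \<union> v))"
      using sum_Pow_Un[OF fa d] al by metis
    show ?thesis
      apply (simp only: S)
      apply (intro sum.cong refl)
      using e apply auto
      done
  qed
  also have "\<dots> = cpur A \<psi>A (\<alpha> \<inter> A) * cpur B \<psi>B (\<alpha> \<inter> B)"
    unfolding cpur_def by (simp add: sum_product)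
  finally show ?thesis .
qed

lemma purity_sum_tensor:
  "(\<Sum>\<alpha>\<in>Pow (A \<union> B). purity (A \<union> B) (tensor_state A \<psi>A B \<psi>B) \<alpha>)
   = (\<Sum>\<alpha>\<in>Pow A. purity A \<psi>A \<alpha>) * (\<Sum>\<alpha>\<in>Pow B. purity B \<psi>B \<alpha>)"
proof -
  have "(\<Sum>\<alpha>\<in>Pow (A \<union> B). purity (A \<union> B) (tensor_state A \<psi>A B \<psi>B) \<alpha>)
     = (\<Sum>u\<in>Pow A. \<Sum>v\<in>Pow B. purity (A \<union> B) (tensor_state A \<psi>A B \<psi>B) (u \<union> v))"
    by (rule sum_Pow_Un[OF fA fB dis])
  also have "\<dots> = (\<Sum>u\<in>Pow A. \<Sum>v\<in>Pow B. purity A \<psi>A u * purity B \<psi>B v)"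
  proof (intro sum.cong refl)
    fix u v assume "u \<in> Pow A" "v \<in> Pow B"
    then have e: "(u \<union> v) \<inter> A = u" "(u \<union> v) \<inter> B = v" "u \<union> v \<subseteq> A \<union> B" using dis by auto
    show "purity (A \<union> B) (tensor_state A \<psi>A B \<psi>B) (u \<union> v) = purity A \<psi>A u * purity B \<psi>B v"
      unfolding purity_cpur cpur_tensor[OF e(3)] e(1,2)
      using cpur_real[of A \<psi>A u] by simp
  qed
  also have "\<dots> = (\<Sum>\<alpha>\<in>Pow A. purity A \<psi>A \<alpha>) * (\<Sum>\<alpha>\<in>Pow B. purity B \<psi>B \<alpha>)"
    by (simp add: sum_product)
  finally show ?thesis .
qed

end

theorem proposition1:
  fixes n :: nat and A B :: "nat set" and \<psi>A \<psi>B :: "nat set \<Rightarrow> complex"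
  assumes "n \<ge> 2"
    and "A \<union> B = {1..n}" and "A \<inter> B = {}" and "A \<noteq> {}" and "B \<noteq> {}"
    and "pure_state A \<psi>A" and "pure_state B \<psi>B"
  shows "conc_ent {1..n} (tensor_state A \<psi>A B \<psi>B)
         = conc_ent A \<psi>A + conc_ent B \<psi>B - conc_ent A \<psi>A * conc_ent B \<psi>B"
proof -
  have fA: "finite A" and fB: "finite B" using assms(6,7) unfolding pure_state_def by auto
  have c: "card (A \<union> B) = card A + card B" using card_Un_disjoint[OF fA fB assms(3)] .
  show ?thesis
    unfolding assms(2)[symmetric] conc_ent_def purity_sum_tensor[OF fA fB assms(3)] c
    by (simp add: power_add field_simps)
qed

end
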